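(* Consider a two-asset G3M with weight $w\in(0,1)$ and fee parameter $\gamma\in(0,1)$, reserves $x_t,y_t>0$, pool price $P_t=\frac{w}{1-w}\frac{y_t}{x_t}$ and liquidity $\ell_t=x_t^w y_t^{1-w}$, where reserves change by continuous trades obeying $w\frac{dx}{x}+\gamma(1-w)\frac{dy}{y}=0$ when $dx<0$ and $\gamma w\frac{dx}{x}+(1-w)\frac{dy}{y}=0$ when $dx>0$. Let the reference price $S_t$ be continuous with $\gamma P_0\le S_0\le\gamma^{-1}P_0$, assume no noise traders, a frictionless reference market and continuous instantaneous arbitrage, and write $\ln P_t=\ln P_0+U_t-L_t$, with $L_t,U_t$ continuous non-decreasing, $L_0=U_0=0$, $L$ increasing only when $Z_t=\ln(S_t/P_t)=\ln\gamma$ and $U$ only when $Z_t=-\ln\gamma$. Then $\ell_t$ is non-decreasing and predictable, and $$d\ln\ell_t=\frac{(1-\gamma)w(1-w)}{1-w+\gamma w}\,dL_t+\frac{(1-\gamma)w(1-w)}{\gamma(1-w)+w}\,dU_t.$$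
   Context: $L_t$ (resp. $U_t$) is the cumulative decrease (resp. increase) of $\ln P_t$ caused by arbitrage sales of $X$ to (resp. purchases of $X$ from) the pool. *)

theory Defs
  imports "HOL-Analysis.Analysis"
begin

definition pool_price :: "real \<Rightarrow> real \<Rightarrow> real \<Rightarrow> real" where
  "pool_price w x y = (w / (1 - w)) * (y / x)"

definition liquidity :: "real \<Rightarrow> real \<Rightarrow> real \<Rightarrow> real" where
  "liquidity w x y = x powr w * y powr (1 - w)"

text \<open>Pathwise version of: "F increases only when the condition C holds", i.e.
  F is constant on every time interval on which C fails throughout.\<close>
definition increases_only_when :: "(real \<Rightarrow> real) \<Rightarrow> (real \<Rightarrow> bool) \<Rightarrow> bool" where
  "increases_only_when F C \<longleftrightarrow>
     (\<forall>s t. 0 \<le> s \<and> s \<le> t \<and> (\<forall>r\<in>{s..t}. \<not> C r) \<longrightarrow> F s = F t)"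

end

theory Submission
  imports Defs
begin

lemma aux_cancel:
  fixes a b c d :: real
  assumes "b \<noteq> 0" "d \<noteq> 0"
  shows "a * d / b * (c * (b / d)) = a * c"
  using assms by (simp add: field_simps)

theorem mainTheorem4:
  fixes w \<gamma> :: real
    and x y S A B L U :: "real \<Rightarrow> real"
  assumes w: "0 < w" "w < 1"
    and gam: "0 < \<gamma>" "\<gamma> < 1"
    and pos: "\<forall>t\<ge>0. x t > 0 \<and> y t > 0"
    \<comment> \<open>reserves move only through continuous trades: A is the cumulative increase of
        ln x from sales of X to the pool (dx>0), B the cumulative decrease of ln x from
        purchases of X from the pool (dx<0)\<close>
    and A_cont: "continuous_on {0..} A" and A_mono: "mono_on {0..} A" and A0: "A 0 = 0"
    and B_cont: "continuous_on {0..} B" and B_mono: "mono_on {0..} B" and B0: "B 0 = 0"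
    \<comment> \<open>trade rules: \<gamma> w dx/x + (1-w) dy/y = 0 when dx>0,
        w dx/x + \<gamma>(1-w) dy/y = 0 when dx<0\<close>
    and x_dyn: "\<forall>t\<ge>0. ln (x t) = ln (x 0) + A t - B t"
    and y_dyn: "\<forall>t\<ge>0. ln (y t) = ln (y 0) - (\<gamma> * w / (1 - w)) * A t
                                     + (w / (\<gamma> * (1 - w))) * B t"
    \<comment> \<open>L (resp. U): cumulative decrease (resp. increase) of ln P caused by sales
        (resp. purchases) of X\<close>
    and L_def: "\<forall>t\<ge>0. L t = A t + (\<gamma> * w / (1 - w)) * A t"
    and U_def: "\<forall>t\<ge>0. U t = (w / (\<gamma> * (1 - w))) * B t + B t"
    \<comment> \<open>reference price and arbitrage\<close>
    and S_cont: "continuous_on {0..} S"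
    and S_pos: "\<forall>t\<ge>0. S t > 0"
    and S0: "\<gamma> * pool_price w (x 0) (y 0) \<le> S 0" "S 0 \<le> pool_price w (x 0) (y 0) / \<gamma>"
    and decomp: "\<forall>t\<ge>0. ln (pool_price w (x t) (y t))
                        = ln (pool_price w (x 0) (y 0)) + U t - L t"
    and L_cont: "continuous_on {0..} L" and L_mono: "mono_on {0..} L" and L0: "L 0 = 0"
    and U_cont: "continuous_on {0..} U" and U_mono: "mono_on {0..} U" and U0: "U 0 = 0"
    and band: "\<forall>t\<ge>0. ln \<gamma> \<le> ln (S t / pool_price w (x t) (y t))
                      \<and> ln (S t / pool_price w (x t) (y t)) \<le> - ln \<gamma>"
    and L_supp: "increases_only_when L (\<lambda>t. ln (S t / pool_price w (x t) (y t)) = ln \<gamma>)"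
    and U_supp: "increases_only_when U (\<lambda>t. ln (S t / pool_price w (x t) (y t)) = - ln \<gamma>)"
  shows "mono_on {0..} (\<lambda>t. liquidity w (x t) (y t))
       \<and> continuous_on {0..} (\<lambda>t. liquidity w (x t) (y t))
       \<and> (\<forall>t\<ge>0. ln (liquidity w (x t) (y t)) = ln (liquidity w (x 0) (y 0))
              + ((1 - \<gamma>) * w * (1 - w) / (1 - w + \<gamma> * w)) * L t
              + ((1 - \<gamma>) * w * (1 - w) / (\<gamma> * (1 - w) + w)) * U t)"
proof -
  define c1 where "c1 = (1 - \<gamma>) * w * (1 - w) / (1 - w + \<gamma> * w)"
  define c2 where "c2 = (1 - \<gamma>) * w * (1 - w) / (\<gamma> * (1 - w) + w)"
  have d1: "1 - w + \<gamma> * w > 0" using w gam by (smt (verit) mult_pos_pos)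
  have d2: "\<gamma> * (1 - w) + w > 0" using w gam by (smt (verit) mult_pos_pos)
  have c1nn: "c1 \<ge> 0" unfolding c1_def using w gam d1 by simp
  have c2nn: "c2 \<ge> 0" unfolding c2_def using w gam d2 by simp
  have lnliq: "ln (liquidity w (x t) (y t)) = w * ln (x t) + (1 - w) * ln (y t)" if "t \<ge> 0" for t
    using pos that by (auto simp: liquidity_def ln_mult ln_powr)
  have liqpos: "liquidity w (x t) (y t) > 0" if "t \<ge> 0" for t
    using pos that by (auto simp: liquidity_def)
  have main: "ln (liquidity w (x t) (y t)) = ln (liquidity w (x 0) (y 0)) + c1 * L t + c2 * U t"
    if t: "t \<ge> 0" for t
  proof -
    have xt: "ln (x t) = ln (x 0) + A t - B t" using x_dyn t by blast
    have yt: "ln (y t) = ln (y 0) - (\<gamma> * w / (1 - w)) * A t + (w / (\<gamma> * (1 - w))) * B t"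
      using y_dyn t by blast
    have e1: "(1 - w) * (\<gamma> * w / (1 - w)) = \<gamma> * w" using w by simp
    have e2: "(1 - w) * (w / (\<gamma> * (1 - w))) = w / \<gamma>" using w gam by simp
    have "ln (liquidity w (x t) (y t)) = w * (ln (x 0) + A t - B t)
        + (1 - w) * (ln (y 0) - (\<gamma> * w / (1 - w)) * A t + (w / (\<gamma> * (1 - w))) * B t)"
      using lnliq[OF t] xt yt by simp
    also have "\<dots> = (w * ln (x 0) + (1 - w) * ln (y 0)) + w * A t - w * B t
        - ((1 - w) * (\<gamma> * w / (1 - w))) * A t + ((1 - w) * (w / (\<gamma> * (1 - w)))) * B t"
      by (simp add: algebra_simps)
    also have "\<dots> = ln (liquidity w (x 0) (y 0)) + ((1 - \<gamma>) * w) * A t + ((1 - \<gamma>) * w / \<gamma>) * B t"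
      unfolding e1 e2 lnliq[of 0, simplified] using gam by (simp add: field_simps)
    also have "((1 - \<gamma>) * w) * A t = c1 * L t"
    proof -
      have "L t = A t * ((1 - w + \<gamma> * w) / (1 - w))" using L_def t w by (simp add: field_simps)
      then have "c1 * L t = (1 - \<gamma>) * w * (1 - w) / (1 - w + \<gamma> * w) * (A t * ((1 - w + \<gamma> * w) / (1 - w)))"
        by (simp only: c1_def)
      also have "\<dots> = (1 - \<gamma>) * w * A t"
        using aux_cancel[of "1 - w + \<gamma> * w" "1 - w" "(1 - \<gamma>) * w" "A t"] d1 w by simp
      finally show ?thesis by simp
    qed
    also have "((1 - \<gamma>) * w / \<gamma>) * B t = c2 * U t"
    proof -
      have "U t = B t * ((\<gamma> * (1 - w) + w) / (\<gamma> * (1 - w)))" using U_def t w gam by (simp add: field_simps)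
      then have "c2 * U t = (1 - \<gamma>) * w * (1 - w) / (\<gamma> * (1 - w) + w) * (B t * ((\<gamma> * (1 - w) + w) / (\<gamma> * (1 - w))))"
        by (simp only: c2_def)
      also have "\<dots> = (1 - \<gamma>) * w / \<gamma> * B t"
        using aux_cancel[of "\<gamma> * (1 - w) + w" "\<gamma> * (1 - w)" "(1 - \<gamma>) * w / \<gamma>" "B t"] d2 w gam by simp
      finally show ?thesis by simp
    qed
    finally show ?thesis .
  qed
  define K where "K = ln (liquidity w (x 0) (y 0))"
  have eq: "liquidity w (x t) (y t) = exp (K + c1 * L t + c2 * U t)"
    if "t \<ge> 0" for t
    using main[OF that] liqpos[OF that] unfolding K_def by (metis exp_ln)
  have m: "mono_on {0..} (\<lambda>t. liquidity w (x t) (y t))"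
  proof (rule mono_onI)
    fix r s :: real assume r: "r \<in> {0..}" and s: "s \<in> {0..}" and rs: "r \<le> s"
    have "L r \<le> L s" using L_mono r s rs by (simp add: mono_on_def)
    moreover have "U r \<le> U s" using U_mono r s rs by (simp add: mono_on_def)
    ultimately have "c1 * L r + c2 * U r \<le> c1 * L s + c2 * U s"
      using c1nn c2nn by (meson add_mono mult_left_mono)
    then show "liquidity w (x r) (y r) \<le> liquidity w (x s) (y s)"
      using eq[of r] eq[of s] r s by simp
  qed
  have c: "continuous_on {0..} (\<lambda>t. liquidity w (x t) (y t))"
  proof -
    have "continuous_on {0..} (\<lambda>t. exp (K + c1 * L t + c2 * U t))"
      by (intro continuous_intros L_cont U_cont)
    moreover have "\<And>t. t \<in> {0..} \<Longrightarrow> liquidity w (x t) (y t) = exp (K + c1 * L t + c2 * U t)"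
      using eq by simp
    ultimately show ?thesis using continuous_on_cong by (metis (no_types, lifting))
  qed
  show ?thesis using m c main unfolding c1_def c2_def by blast
qed

end
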